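(* Let $X$ be a finite-dimensional normed space and let $(A_n)_{n\in\mathbb N}$ be a nested (i.e. $A_{n+1}\subset A_n$) sequence of unbounded connected subsets of $X$. Then either $\bigcap_{n\in\mathbb N}A_n=\emptyset$, or $\bigcap_{n\in\mathbb N}A_n^\varepsilon$ is unbounded for every $\varepsilon>0$.
   Context: For a set $A\subset X$ and $\varepsilon>0$, $A^\varepsilon=\{x\in X:\mathrm{dist}(x,A)\le\varepsilon\}$. *)

theory Defs
  imports "HOL-Analysis.Analysis"
begin

definition thicken :: "'a::metric_space set \<Rightarrow> real \<Rightarrow> 'a set" where
  "thicken A e = {x. infdist x A \<le> e}"

end

theory Submission
  imports Defs
begin

lemma fd_cball_compact:
  fixes B :: "'a::real_normed_vector set"
  assumes "finite B" "span B = UNIV"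
  shows "compact (cball (0::'a) R)"
proof -
  obtain C where CB: "C \<subseteq> B" and indC: "independent C" and BC: "B \<subseteq> span C"
    by (rule maximal_independent_subset[of B])
  have spC: "UNIV \<subseteq> span C"
    using assms(2) span_mono[OF BC] span_span[of C] by simp
  have finC: "finite C" using CB assms(1) finite_subset by blast
  obtain n :: nat and b where Cb: "C = b ` {i. i < n}" and injb: "inj_on b {i. i < n}"
    using finite_imp_nat_seg_image_inj_on[OF finC] by blast
  have lt: "{i. i < n} = {..<n}" by auto
  define g where "g x = (\<Sum>i<n. x i *\<^sub>R b i)" for x :: "nat \<Rightarrow> real"
  have contg: "continuous_on UNIV g"
    unfolding g_def by (intro continuous_intros) auto
  have gsum: "g x = (\<Sum>v\<in>C. x (inv_into {..<n} b v) *\<^sub>R v)" for x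
    unfolding g_def Cb lt
    by (subst sum.reindex) (use injb lt in auto)
  have indep0: "x i = 0" if "g x = 0" "i < n" for x i
  proof -
    have "\<forall>v\<in>C. x (inv_into {..<n} b v) = 0"
      using real_vector.independentD[OF indC finC order_refl, of "\<lambda>v. x (inv_into {..<n} b v)"] that(1) gsum[of x] by auto
    then have "x (inv_into {..<n} b (b i)) = 0" using Cb that(2) by auto
    then show ?thesis using injb lt that(2) by (simp add: inv_into_f_f)
  qed
  define T where "T M = {x::nat\<Rightarrow>real. \<forall>i. x i \<in> (if i < n then {-M..M} else {0})}" for M
  have compT: "compact (T M)" for M
  proof -
    have "T M = PiE UNIV (\<lambda>i. if i < n then {-M..M} else {0})"
      unfolding T_def PiE_def Pi_def by auto
    moreover have "compactin (product_topology (\<lambda>i. euclidean) UNIV) (PiE UNIV (\<lambda>i. if i < n then {-M..M::real} else {0}))"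
      by (subst compactin_PiE) auto
    ultimately show ?thesis by (simp add: euclidean_product_topology)
  qed
  define S where "S = T 1 \<inter> {x. (\<Sum>i<n. \<bar>x i\<bar>) = 1}"
  have ca: "continuous_on UNIV (\<lambda>x::nat\<Rightarrow>real. \<Sum>i<n. \<bar>x i\<bar>)"
    by (intro continuous_on_sum continuous_on_rabs continuous_on_product_coordinates)
  have clS: "closed {x::nat\<Rightarrow>real. (\<Sum>i<n. \<bar>x i\<bar>) = 1}"
    by (rule closed_Collect_eq[OF ca continuous_on_const])
  have compS: "compact S" unfolding S_def by (rule compact_Int_closed[OF compT clS])
  have compgS: "compact (g ` S)"
    by (rule compact_continuous_image[OF continuous_on_subset[OF contg subset_UNIV] compS])
  have "0 \<notin> g ` S"
  proof
    assume "0 \<in> g ` S"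
    then obtain x where x: "x \<in> S" "g x = 0" by auto
    then have "\<forall>i<n. x i = 0" using indep0 by auto
    then have "(\<Sum>i<n. \<bar>x i\<bar>) = 0" by simp
    with x show False unfolding S_def by simp
  qed
  moreover have "open (- (g ` S))" using compact_imp_closed[OF compgS] by (simp add: open_Compl)
  ultimately obtain m where m0: "m > 0" "ball 0 m \<subseteq> - (g ` S)"
    using open_contains_ball by blast
  then have m: "m > 0" "ball 0 m \<inter> g ` S = {}" by auto
  have mS: "m \<le> norm (g x)" if "x \<in> S" for x
  proof (rule ccontr)
    assume "\<not> m \<le> norm (g x)"
    then have "g x \<in> ball 0 m" by (simp add: dist_norm)
    with m(2) that show False by blast
  qed
  have low: "m * (\<Sum>i<n. \<bar>x i\<bar>) \<le> norm (g x)" if x0: "\<forall>i\<ge>n. x i = 0" for x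
  proof (cases "(\<Sum>i<n. \<bar>x i\<bar>) = 0")
    case True then show ?thesis by simp
  next
    case False
    define s where "s = (\<Sum>i<n. \<bar>x i\<bar>)"
    have "s \<ge> 0" unfolding s_def by (intro sum_nonneg) simp
    then have spos: "s > 0" using False unfolding s_def by linarith
    define y where "y i = x i / s" for i
    have yle: "\<bar>x i\<bar> \<le> s" if "i < n" for i
      unfolding s_def using that by (intro member_le_sum) auto
    have "y \<in> T 1" unfolding T_def
    proof (intro CollectI allI)
      fix i show "y i \<in> (if i < n then {-1..1} else {0})"
      proof (cases "i < n")
        case True
        have "\<bar>x i\<bar> / s \<le> 1" using yle[OF True] spos by simp
        then have "\<bar>y i\<bar> \<le> 1" unfolding y_def using spos by (simp add: abs_divide)
        then show ?thesis using True by (simp add: abs_le_iff)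
      next
        case False then show ?thesis using x0 by (simp add: y_def)
      qed
    qed
    moreover have "(\<Sum>i<n. \<bar>y i\<bar>) = (\<Sum>i<n. \<bar>x i\<bar>) / s"
      unfolding y_def using spos by (simp add: sum_divide_distrib abs_divide)
    then have "(\<Sum>i<n. \<bar>y i\<bar>) = 1" using spos unfolding s_def[symmetric] by simp
    ultimately have "y \<in> S" unfolding S_def by blast
    then have "m \<le> norm (g y)" by (rule mS)
    moreover have "g y = (1/s) *\<^sub>R g x"
      unfolding g_def y_def scaleR_sum_right by (intro sum.cong refl) (simp add: divide_inverse_commute)
    ultimately have "m \<le> norm (g x) / s" using spos by simp
    then have "m * s \<le> norm (g x)" using spos by (simp add: pos_le_divide_eq)
    then show ?thesis unfolding s_def .
  qed
  have sub: "cball 0 R \<subseteq> g ` T (R/m)"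
  proof
    fix v :: 'a assume v: "v \<in> cball 0 R"
    have "v \<in> span C" using spC by auto
    then obtain u where u: "(\<Sum>w\<in>C. u w *\<^sub>R w) = v"
      using span_finite[OF finC] by auto
    define x where "x i = (if i < n then u (b i) else 0)" for i
    have gx: "g x = v"
      unfolding g_def x_def using u Cb injb lt by (simp add: sum.reindex)
    have h: "m * (\<Sum>i<n. \<bar>x i\<bar>) \<le> R"
    proof -
      have "m * (\<Sum>i<n. \<bar>x i\<bar>) \<le> norm (g x)" by (rule low) (simp add: x_def)
      also have "\<dots> \<le> R" using gx v by simp
      finally show ?thesis .
    qed
    have "x \<in> T (R/m)" unfolding T_def
    proof (intro CollectI allI)
      fix i
      show "x i \<in> (if i < n then {-(R/m)..R/m} else {0})"
      proof (cases "i < n")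
        case True
        have "\<bar>x i\<bar> \<le> (\<Sum>i<n. \<bar>x i\<bar>)" using True by (intro member_le_sum) auto
        then have "m * \<bar>x i\<bar> \<le> R" using h m(1) mult_left_mono[of "\<bar>x i\<bar>" "\<Sum>i<n. \<bar>x i\<bar>" m] by linarith
        then have "\<bar>x i\<bar> \<le> R/m" using m(1) by (simp add: le_divide_eq mult.commute)
        then show ?thesis using True by (simp add: abs_le_iff)
      qed (simp add: x_def)
    qed
    then show "v \<in> g ` T (R/m)" using gx by blast
  qed
  have "compact (g ` T (R/m))"
    by (rule compact_continuous_image[OF continuous_on_subset[OF contg subset_UNIV] compT])
  then have "compact (g ` T (R/m) \<inter> cball 0 R)" by (rule compact_Int_closed) simp
  moreover have "g ` T (R/m) \<inter> cball 0 R = cball 0 R" using sub by blast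
  ultimately show ?thesis by simp
qed

theorem mainTheorem7:
  fixes A :: "nat \<Rightarrow> 'a::real_normed_vector set"
  assumes findim: "\<exists>B. finite B \<and> span B = (UNIV :: 'a set)"
    and nested: "\<And>n. A (Suc n) \<subseteq> A n"
    and unbdd: "\<And>n. \<not> bounded (A n)"
    and conn: "\<And>n. connected (A n)"
  shows "(\<Inter>n. A n) = {} \<or> (\<forall>e>0. \<not> bounded (\<Inter>n. thicken (A n) e))"
proof (cases "(\<Inter>n. A n) = {}")
  case True then show ?thesis by simp
next
  case False
  then obtain x0 where x0: "\<And>n. x0 \<in> A n" by auto
  obtain B :: "'a set" where B: "finite B" "span B = UNIV" using findim by blast
  have ccomp: "compact (cball x0 r)" for r
  proof -
    have sub: "cball x0 r \<subseteq> cball 0 (r + norm x0)"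
    proof
      fix y assume "y \<in> cball x0 r"
      then have "norm (y - x0) \<le> r" by (simp add: dist_norm norm_minus_commute)
      moreover have "norm y \<le> norm (y - x0) + norm x0" using norm_triangle_ineq[of "y - x0" x0] by simp
      ultimately show "y \<in> cball 0 (r + norm x0)" by simp
    qed
    have "compact (cball 0 (r + norm x0) \<inter> cball x0 r)"
      by (rule compact_Int_closed[OF fd_cball_compact[OF B] closed_cball])
    moreover have "cball 0 (r + norm x0) \<inter> cball x0 r = cball x0 r" using sub by blast
    ultimately show ?thesis by simp
  qed
  have anti: "A k \<subseteq> A m" if "m \<le> k" for m k
    using lift_Suc_antimono_le[of A, OF nested that] .
  have "\<forall>e>0. \<not> bounded (\<Inter>n. thicken (A n) e)"
  proof (intro allI impI notI)
    fix e :: real assume e: "e > 0" and bd: "bounded (\<Inter>n. thicken (A n) e)"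
    then obtain R where R: "\<And>y. y \<in> (\<Inter>n. thicken (A n) e) \<Longrightarrow> norm y \<le> R"
      unfolding bounded_iff by blast
    have x0t: "x0 \<in> (\<Inter>n. thicken (A n) e)"
      using x0 e by (simp add: thicken_def infdist_zero)
    then have "norm x0 \<le> R" by (rule R)
    define r where "r = R + norm x0 + 1"
    have rpos: "r \<ge> 0" unfolding r_def using \<open>norm x0 \<le> R\<close> norm_ge_zero[of x0] by linarith
    have "\<exists>a\<in>A n. dist x0 a = r" for n
    proof -
      have "\<not> A n \<subseteq> cball x0 r" using unbdd[of n] bounded_cball bounded_subset by blast
      then obtain z where z0: "z \<in> A n" "z \<notin> cball x0 r" by blast
      then have z: "z \<in> A n" "dist x0 z > r" by (auto simp: not_le)
      have "continuous_on (A n) (dist x0)" by (intro continuous_intros)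
      then have cc: "connected (dist x0 ` A n)" using conn[of n] connected_continuous_image by blast
      have "0 \<in> dist x0 ` A n" using x0[of n] by force
      moreover have "dist x0 z \<in> dist x0 ` A n" using z by blast
      ultimately have "r \<in> dist x0 ` A n"
        using cc rpos z(2) unfolding connected_iff_interval by (meson less_imp_le)
      then show ?thesis by auto
    qed
    then obtain a where a: "\<And>n. a n \<in> A n" "\<And>n. dist x0 (a n) = r" by metis
    have clsph: "closed (sphere x0 r)"
    proof -
      have "closed {y. dist x0 y = r}"
        by (rule closed_Collect_eq[OF continuous_on_dist[OF continuous_on_const continuous_on_id] continuous_on_const])
      then show ?thesis by (simp add: sphere_def)
    qed
    have "sphere x0 r = cball x0 r \<inter> sphere x0 r" by auto
    then have "compact (sphere x0 r)" using compact_Int_closed[OF ccomp[of r] clsph] by metis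
    then have "seq_compact (sphere x0 r)" by (rule compact_imp_seq_compact)
    moreover have "\<forall>n. a n \<in> sphere x0 r" using a(2) by simp
    ultimately obtain l f where l: "l \<in> sphere x0 r" and f: "strict_mono f" and lim: "(a \<circ> f) \<longlonglongrightarrow> l"
      unfolding seq_compact_def by blast
    have "l \<in> thicken (A m) e" for m
    proof -
      have "(\<lambda>k. (a \<circ> f) (k + m)) \<longlonglongrightarrow> l" using LIMSEQ_ignore_initial_segment[OF lim] .
      moreover have "(a \<circ> f) (k + m) \<in> A m" for k
      proof -
        have "m \<le> f (k + m)" using seq_suble[OF f, of "k + m"] by linarith
        then show ?thesis using anti a(1) by auto
      qed
      ultimately have "l \<in> closure (A m)" unfolding closure_sequential
        by (intro exI[of _ "\<lambda>k. (a \<circ> f) (k + m)"] conjI allI) simp_all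
      then have "infdist l (A m) = 0" using in_closure_iff_infdist_zero[of "A m" l] x0[of m] by blast
      then show ?thesis using e by (simp add: thicken_def)
    qed
    then have "norm l \<le> R" using R by blast
    moreover have "norm x0 + norm l \<ge> r"
      using l norm_triangle_ineq4[of x0 l] by (simp add: dist_norm)
    ultimately show False using \<open>norm x0 \<le> R\<close> unfolding r_def by linarith
  qed
  then show ?thesis by simp
qed

end
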